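(* Let $\epsilon\ge0$, $k=b/((1+\epsilon)\ln b)$, and let $b$ be sufficiently large. Let $(x_0,y_0)$ be proper $k$-colorings of the star graph $G^*$ with $x_0(r)=y_0(r)$ and such that there are colors $c_1,c_2$ with $x_0(\ell)=c_1$, $y_0(\ell)=c_2$ for every leaf $\ell$ with $x_0(\ell)\ne y_0(\ell)$. Then for the maximal one-step coupling $(X_t,Y_t)$ started at $(x_0,y_0)$, with probability at least $1/2$ we have $X_{T_2}=Y_{T_2}$, where $T_2=4(b+1)\ln b$.
   Context: $G^*$: star graph with root $r$ and $b$ leaves. $A_\sigma(v)=\{c\in\{1,\dots,k\}: c\ne\sigma(u)\ \forall u\sim v\}$. Heat-bath Glauber dynamics: choose a uniform vertex and recolor it uniformly from its available colors. Maximal one-step coupling: both chains choose the same uniform vertex $v$; for each $c\in A_{X_t}(v)\cap A_{Y_t}(v)$, with probability $1/\max\{|A_{X_t}(v)|,|A_{Y_t}(v)|\}$ both set $v$ to $c$; otherwise colors are drawn from the correct marginals, coupled arbitrarily. *)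

theory Defs
  imports "HOL-Probability.Probability"
begin

text \<open>Star graph G* with b leaves: vertex 0 is the root r, vertices 1..b are the leaves.
  A k-coloring is an extensional function from {0..b} to {1..k}.\<close>

definition star_adj :: "nat \<Rightarrow> nat \<Rightarrow> nat \<Rightarrow> bool" where
  "star_adj b u v \<longleftrightarrow> (u = 0 \<and> v \<in> {1..b}) \<or> (v = 0 \<and> u \<in> {1..b})"

definition colorings :: "nat \<Rightarrow> nat \<Rightarrow> (nat \<Rightarrow> nat) set" where
  "colorings b k = {0..b} \<rightarrow>\<^sub>E {1..k}"

definition proper_coloring :: "nat \<Rightarrow> nat \<Rightarrow> (nat \<Rightarrow> nat) \<Rightarrow> bool" where
  "proper_coloring b k \<sigma> \<longleftrightarrow> \<sigma> \<in> colorings b k \<and>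
     (\<forall>u\<in>{0..b}. \<forall>v\<in>{0..b}. star_adj b u v \<longrightarrow> \<sigma> u \<noteq> \<sigma> v)"

definition avail :: "nat \<Rightarrow> nat \<Rightarrow> (nat \<Rightarrow> nat) \<Rightarrow> nat \<Rightarrow> nat set" where
  "avail b k \<sigma> v = {c \<in> {1..k}. \<forall>u\<in>{0..b}. star_adj b u v \<longrightarrow> c \<noteq> \<sigma> u}"

text \<open>A (time-dependent) one-step coupling kernel: given the time t, the current pair of
  colorings and the chosen vertex v, a joint law of the two new colors of v.
  It is a maximal one-step coupling of heat-bath Glauber dynamics if both marginals
  are uniform on the respective available sets and each common available color c
  is chosen jointly with probability (at least, hence exactly) 1/max(|A_X(v)|,|A_Y(v)|);
  the rest of the joint law is arbitrary.\<close>
definition maximal_coupling_kernel ::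
  "nat \<Rightarrow> nat \<Rightarrow> (nat \<Rightarrow> (nat \<Rightarrow> nat) \<times> (nat \<Rightarrow> nat) \<Rightarrow> nat \<Rightarrow> (nat \<times> nat) pmf) \<Rightarrow> bool" where
  "maximal_coupling_kernel b k K \<longleftrightarrow>
     (\<forall>t x y v. proper_coloring b k x \<longrightarrow> proper_coloring b k y \<longrightarrow> v \<in> {0..b} \<longrightarrow>
        map_pmf fst (K t (x, y) v) = pmf_of_set (avail b k x v) \<and>
        map_pmf snd (K t (x, y) v) = pmf_of_set (avail b k y v) \<and>
        (\<forall>c \<in> avail b k x v \<inter> avail b k y v.
           pmf (K t (x, y) v) (c, c) \<ge> 1 / real (max (card (avail b k x v)) (card (avail b k y v)))))"

primrec coupled_chain ::
  "nat \<Rightarrow> (nat \<Rightarrow> (nat \<Rightarrow> nat) \<times> (nat \<Rightarrow> nat) \<Rightarrow> nat \<Rightarrow> (nat \<times> nat) pmf) \<Rightarrow>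
   (nat \<Rightarrow> nat) \<Rightarrow> (nat \<Rightarrow> nat) \<Rightarrow> nat \<Rightarrow> ((nat \<Rightarrow> nat) \<times> (nat \<Rightarrow> nat)) pmf" where
  "coupled_chain b K x0 y0 0 = return_pmf (x0, y0)"
| "coupled_chain b K x0 y0 (Suc t) =
     bind_pmf (coupled_chain b K x0 y0 t) (\<lambda>(x, y).
       bind_pmf (pmf_of_set {0..b}) (\<lambda>v.
         map_pmf (\<lambda>(c, c'). (x(v := c), y(v := c'))) (K t (x, y) v)))"

end

theory Submission
  imports Defs
begin


lemma one_minus_pow: "0 \<le> nu \<Longrightarrow> nu \<le> 1 \<Longrightarrow> 1 - (1 - nu)^j \<ge> real j * nu * (1 - nu)^j"
proof (induction j)
  case 0 then show ?case by simp
next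
  case (Suc j)
  have a: "(1 - nu)^(Suc j) \<le> (1-nu)^j" using Suc.prems by (simp, intro mult_left_le_one_le) auto
  have b: "(1 - nu)^(Suc j) \<ge> 0" using Suc.prems by simp
  have "1 - (1-nu)^(Suc j) = (1 - (1-nu)^j) + nu * (1-nu)^j" by (simp add: algebra_simps)
  also have "\<dots> \<ge> real j * nu * (1 - nu)^j + nu * (1-nu)^j" using Suc by simp
  finally have c: "1 - (1-nu)^(Suc j) \<ge> real j * nu * (1 - nu)^j + nu * (1-nu)^j" .
  have "real j * nu * (1 - nu)^(Suc j) \<le> real j * nu * (1 - nu)^j"
    using a Suc.prems by (intro mult_left_mono) auto
  moreover have "nu * (1 - nu)^(Suc j) \<le> nu * (1-nu)^j" using a Suc.prems by (intro mult_left_mono) auto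
  ultimately show ?case using c by (simp add: algebra_simps)
qed

lemma term_bound:
  fixes L nu :: real
  assumes L: "L \<ge> 0" and nu: "0 \<le> nu" "nu \<le> 1"
  shows "exp (- L * (1 - (1 - nu)^j)) \<le> exp (- (L * nu / 2))^j + exp (- (L / 2))"
proof (cases "(1 - nu)^j \<ge> 1/2")
  case True
  have "real j * nu * (1/2) \<le> real j * nu * (1 - nu)^j"
    using True nu by (intro mult_left_mono) auto
  then have "1 - (1 - nu)^j \<ge> real j * nu * (1/2)"
    using one_minus_pow[OF nu, of j] by linarith
  then have "L * (real j * nu * (1/2)) \<le> L * (1 - (1 - nu)^j)"
    using L by (intro mult_left_mono) auto
  then have "- L * (1 - (1 - nu)^j) \<le> real j * (- (L * nu / 2))"
    by (simp add: algebra_simps)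
  then have "exp (- L * (1 - (1 - nu)^j)) \<le> exp (real j * (- (L * nu / 2)))" by simp
  also have "\<dots> = exp (- (L * nu / 2))^j" by (subst exp_of_nat_mult[symmetric]) simp
  finally show ?thesis using exp_gt_zero[of "- (L / 2)"] by linarith
next
  case False
  then have "L * (1/2) \<le> L * (1 - (1 - nu)^j)" using L by (intro mult_left_mono) auto
  then have "- L * (1 - (1 - nu)^j) \<le> - (L / 2)" by simp
  then have "exp (- L * (1 - (1 - nu)^j)) \<le> exp (- (L/2))" by simp
  moreover have "exp (- (L * nu / 2))^j \<ge> 0" by simp
  ultimately show ?thesis by linarith
qed

lemma geom_bound:
  fixes x :: real
  assumes x: "x > 0"
  shows "(\<Sum>j<T. exp (-x)^j) \<le> (1 + x) / x"
proof -
  have r1: "exp (-x) < 1" using x by simp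
  have r0: "exp (-x) > 0" by simp
  have "(\<Sum>j<T. exp (-x)^j) = (1 - exp (-x)^T) / (1 - exp (-x))"
    using r1 by (simp add: sum_gp_strict)
  also have "\<dots> \<le> 1 / (1 - exp (-x))"
    using r1 r0 by (intro divide_right_mono) auto
  also have "\<dots> \<le> (1 + x) / x"
  proof -
    have e: "exp x \<ge> 1 + x" by (rule exp_ge_add_one_self)
    have "exp (-x) = 1 / exp x" by (simp add: exp_minus inverse_eq_divide)
    also have "\<dots> \<le> 1 / (1 + x)" using e x by (intro divide_left_mono) auto
    finally have e2: "exp (-x) \<le> 1 / (1 + x)" .
    have "1 - 1 / (1 + x) = x / (1 + x)" using x by (simp add: field_simps)
    then have e3: "1 - exp (-x) \<ge> x / (1 + x)" using e2 by linarith
    have p: "x / (1 + x) > 0" using x by simp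
    have q: "1 - exp (-x) > 0" using e3 p by linarith
    have pos: "0 < (1 - exp (-x)) * (x / (1 + x))" using q p by (rule mult_pos_pos)
    have "1 / (1 - exp (-x)) \<le> 1 / (x / (1 + x))"
      by (rule divide_left_mono[OF e3 _ pos]) simp
    then show ?thesis by simp
  qed
  finally show ?thesis .
qed

lemma exp_cube: fixes s :: real shows "s \<ge> 0 \<Longrightarrow> exp (s/4) \<ge> (s/12)^3"
proof -
  assume s: "s \<ge> 0"
  have "exp (s/4) = exp (s/12)^3" by (subst exp_of_nat_mult[symmetric]) simp
  moreover have "exp (s/12) \<ge> s/12" using exp_ge_add_one_self[of "s/12"] by linarith
  ultimately show ?thesis using s by (simp add: power_mono)
qed

lemma s_exp: fixes s :: real shows "s \<ge> 400 \<Longrightarrow> s * exp (- (s/4)) \<le> 1/90"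
proof -
  assume s: "s \<ge> 400"
  have c: "exp (s/4) \<ge> (s/12)^3" using exp_cube s by simp
  have pos: "(s/12)^3 > 0" using s by simp
  have "s * exp (- (s/4)) = s / exp (s/4)" by (simp add: exp_minus field_simps)
  also have "\<dots> \<le> s / (s/12)^3" using c pos s by (intro divide_left_mono) auto
  also have "\<dots> = 1728 / s^2" using s by (simp add: field_simps power3_eq_cube power2_eq_square)
  also have "\<dots> \<le> 1728 / 400^2" using s by (intro divide_left_mono power_mono) auto
  finally show ?thesis by simp
qed

lemma numeric:
  fixes b k T :: nat
  assumes lb: "ln (real b) \<ge> 400" and k2: "k \<ge> 2" and kb: "real k * ln (real b) \<le> real b"
    and T1: "real T \<ge> 4 * (real b + 1) * ln (real b)" and T2: "real T \<le> 4 * (real b + 1) * ln (real b) + 1"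
  shows "real b * (real b/(real b+1))^T + 2 * ((1/(real b+1)) *
     (\<Sum>j<T. exp (-(real b * (1/(real k - 1)) / 2) * (1 - (real b/(real b+1))^j)))) \<le> 1/2"
proof -
  define s where "s = ln (real b)"
  have s4: "s \<ge> 400" using lb s_def by simp
  have bpos: "real b > 0" using lb by (cases "b = 0") auto
  have bexp: "real b = exp s" unfolding s_def using bpos by simp
  define nu where "nu = 1/(real b+1)"
  have nu0: "nu > 0" "nu \<le> 1" unfolding nu_def by auto
  have al: "real b/(real b+1) = 1 - nu" unfolding nu_def using bpos by (simp add: field_simps)
  define L where "L = real b * (1/(real k - 1)) / 2"
  have k1: "real k - 1 > 0" using k2 by simp
  have Ls: "L \<ge> s/2"
  proof -
    have "(real k - 1) * s \<le> real k * s" using s4 by (simp add: algebra_simps)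
    then have "(real k - 1) * s \<le> real b" using kb s_def by simp
    then have sb: "s \<le> real b / (real k - 1)" using k1 by (simp add: field_simps)
    have "L = (real b / (real k - 1)) / 2" unfolding L_def by simp
    then show ?thesis using divide_right_mono[OF sb, of 2] by simp
  qed
  have L0: "L > 0" using Ls s4 by simp
  have p1: "real b * (real b/(real b+1))^T \<le> 1/100"
  proof -
    have "(1 - nu)^T \<le> exp (-nu)^T"
      using exp_ge_add_one_self[of "-nu"] nu0 by (intro power_mono) auto
    also have "\<dots> = exp (- (nu * real T))" by (subst exp_of_nat_mult[symmetric]) (simp add: algebra_simps)
    also have "\<dots> \<le> exp (- (4 * s))"
    proof -
      have "nu * real T \<ge> nu * (4 * (real b + 1) * s)" using T1 nu0 s_def by (intro mult_left_mono) auto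
      moreover have "nu * (4 * (real b + 1) * s) = 4 * s" unfolding nu_def using bpos by (simp add: field_simps)
      ultimately have "4 * s \<le> nu * real T" by linarith
      then show ?thesis by simp
    qed
    finally have a: "(1 - nu)^T \<le> exp (- (4 * s))" .
    have "real b * (1 - nu)^T \<le> exp s * exp (- (4 * s))" using a bexp bpos by (simp add: mult_left_mono)
    also have "\<dots> = exp (- (3 * s))" by (simp add: exp_add[symmetric])
    also have "\<dots> \<le> 1 / (1 + 3 * s)"
    proof -
      have "exp (3 * s) \<ge> 1 + 3 * s" by (rule exp_ge_add_one_self)
      then have "1 / exp (3 * s) \<le> 1 / (1 + 3 * s)" using s4 by (intro divide_left_mono) auto
      then show ?thesis by (simp add: exp_minus inverse_eq_divide)
    qed
    also have "\<dots> \<le> 1/100" using s4 by (simp add: field_simps)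
    finally show ?thesis unfolding al .
  qed
  define x where "x = L * nu / 2"
  have x0: "x > 0" unfolding x_def using L0 nu0 by simp
  have tb: "exp (-(real b * (1/(real k - 1)) / 2) * (1 - (real b/(real b+1))^j))
      \<le> exp (-x)^j + exp (- (L/2))" for j
    unfolding al x_def using term_bound[of L nu j] L0 nu0 unfolding L_def by simp
  have "(\<Sum>j<T. exp (-(real b * (1/(real k - 1)) / 2) * (1 - (real b/(real b+1))^j)))
      \<le> (\<Sum>j<T. exp (-x)^j + exp (- (L/2)))" by (intro sum_mono tb)
  also have "\<dots> = (\<Sum>j<T. exp (-x)^j) + real T * exp (- (L/2))" by (simp add: sum.distrib)
  also have "\<dots> \<le> (1 + x)/x + real T * exp (- (L/2))" using geom_bound[OF x0, of T] by simp
  finally have S: "(\<Sum>j<T. exp (-(real b * (1/(real k - 1)) / 2) * (1 - (real b/(real b+1))^j)))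
      \<le> (1 + x)/x + real T * exp (- (L/2))" .
  have e1: "nu * ((1 + x)/x) = 2 / L + nu" unfolding x_def using L0 nu0 by (simp add: field_simps)
  have e2: "2 / L \<le> 1/100" using Ls s4 L0 by (simp add: field_simps)
  have e3: "nu \<le> 1/100"
  proof -
    have "real b \<ge> 1 + s" using bexp exp_ge_add_one_self[of s] by simp
    then have "real b + 1 \<ge> 100" using s4 by simp
    then show ?thesis unfolding nu_def by (simp add: field_simps)
  qed
  have e4: "nu * real T \<le> 5 * s"
  proof -
    have "nu * real T \<le> nu * (4 * (real b + 1) * s + 1)" using T2 nu0 s_def by (intro mult_left_mono) auto
    also have "\<dots> = 4 * s + nu" unfolding nu_def using bpos by (simp add: field_simps)
    finally show ?thesis using nu0 s4 by simp
  qed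
  have e5: "exp (- (L/2)) \<le> exp (- (s/4))" using Ls by simp
  have e6: "nu * real T * exp (- (L/2)) \<le> 5 * (s * exp (- (s/4)))"
  proof -
    have "nu * real T * exp (- (L/2)) \<le> (5 * s) * exp (- (s/4))"
      by (rule mult_mono[OF e4 e5]) (use s4 in auto)
    then show ?thesis by simp
  qed
  have e7: "s * exp (- (s/4)) \<le> 1/90" using s_exp s4 by simp
  have "nu * (\<Sum>j<T. exp (-(real b * (1/(real k - 1)) / 2) * (1 - (real b/(real b+1))^j)))
      \<le> nu * ((1 + x)/x + real T * exp (- (L/2)))" using S nu0 by (intro mult_left_mono) auto
  also have "\<dots> = 2 / L + nu + nu * real T * exp (- (L/2))" using e1 by (simp add: algebra_simps)
  finally have P2: "nu * (\<Sum>j<T. exp (-(real b * (1/(real k - 1)) / 2) * (1 - (real b/(real b+1))^j)))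
      \<le> 2 / L + nu + nu * real T * exp (- (L/2))" .
  show ?thesis using p1 P2 e2 e3 e6 e7 unfolding nu_def by linarith
qed



lemma bern: "(be::real) \<ge> 0 \<Longrightarrow> h \<ge> 0 \<Longrightarrow> (be + h)^(Suc w) \<ge> be^(Suc w) + real (Suc w) * be^w * h"
proof (induction w)
  case 0 then show ?case by simp
next
  case (Suc w)
  have "(be+h)^(Suc (Suc w)) = (be+h)*(be+h)^(Suc w)" by simp
  also have "\<dots> \<ge> (be+h)*(be^(Suc w) + real (Suc w) * be^w * h)"
    using Suc by (intro mult_left_mono) auto
  finally have 1: "(be+h)^(Suc (Suc w)) \<ge> (be+h)*(be^(Suc w) + real (Suc w) * be^w * h)" .
  have "(be+h)*(be^(Suc w) + real (Suc w) * be^w * h) \<ge> be^(Suc (Suc w)) + real (Suc (Suc w)) * be^(Suc w) * h"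
    using Suc.prems by (simp add: algebra_simps)
  with 1 show ?case by linarith
qed

definition gfun :: "nat \<Rightarrow> nat \<Rightarrow> nat \<Rightarrow> nat \<Rightarrow> real" where
  "gfun b k j u = exp (-(real b * (1/(real k - 1)) / 2) * (1 - (real b/(real b+1))^j)) * (1 - (real b/(real b+1))^j/2)^u"

lemma g_step:
  assumes k: "k \<ge> 2"
  shows "gfun b k (Suc j) u \<ge> (1/(real b+1)) * (gfun b k j u
     + real u * ((1/(real k - 1)) * gfun b k j u + (1 - 1/(real k - 1)) * gfun b k j (u-1))
     + (real b - real u) * ((1/(real k - 1)) * gfun b k j (Suc u) + (1 - 1/(real k - 1)) * gfun b k j u))"
proof -
  define nu where "nu = 1/(real b+1)"
  define q where "q = 1/(real k - 1)"
  define al where "al = real b/(real b+1)"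
  define del where "del = al^j/2"
  define be where "be = 1 - del"
  define a where "a = exp (-(real b * q / 2) * (1 - al^j))"
  define X where "X = real b * nu * q * del"
  have nu1: "nu * (real b + 1) = 1" unfolding nu_def by simp
  have alnu: "al = 1 - nu" unfolding al_def nu_def by (simp add: field_simps)
  have nupos: "nu > 0" "nu \<le> 1" unfolding nu_def by auto
  have q01: "q > 0" "q \<le> 1" unfolding q_def using k by auto
  have al01: "al \<ge> 0" "al \<le> 1" unfolding al_def by auto
  have aj: "al^j \<ge> 0" "al^j \<le> 1" using al01 by (auto simp: power_le_one)
  have del01: "del \<ge> 0" "del \<le> 1/2" unfolding del_def using aj by auto
  have bnu: "real b * nu \<le> 1" "real b * nu \<ge> 0" unfolding nu_def by auto
  have X01: "X \<ge> 0" "X \<le> 1"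
  proof -
    show "X \<ge> 0" unfolding X_def using bnu q01 del01 by simp
    have "real b * nu * q * del \<le> 1 * 1 * 1"
      using bnu q01 del01 by (intro mult_mono) auto
    then show "X \<le> 1" unfolding X_def by simp
  qed
  have apos: "a > 0" unfolding a_def by simp
  have gj: "\<And>v. gfun b k j v = a * be^v"
    unfolding gfun_def a_def be_def del_def al_def q_def by simp
  have gsj: "gfun b k (Suc j) u = (a * exp (-X)) * (be + nu*del)^u"
  proof -
    have e: "-(real b * q / 2) * (1 - al^(Suc j)) = -(real b * q / 2) * (1 - al^j) + - X"
      unfolding X_def del_def alnu by (simp add: field_simps)
    have "1 - al^(Suc j)/2 = be + nu*del" unfolding be_def del_def alnu by (simp add: field_simps)
    then show ?thesis unfolding gfun_def a_def
      using e by (simp add: q_def al_def exp_add[symmetric])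
  qed
  have eX: "exp (-X) \<ge> 1 - X" using exp_ge_add_one_self[of "-X"] by simp
  have be0: "be \<ge> 0" unfolding be_def using del01 by simp
  show ?thesis
  proof (cases u)
    case 0
    have "gfun b k (Suc j) u \<ge> a * (1 - X)"
      using gsj eX apos 0 by simp
    moreover have "nu * (a + real b * (q * (a*be) + (1-q)*a)) = a * (1 - X)"
      unfolding X_def be_def nu_def by (simp add: field_simps)
    ultimately show ?thesis unfolding 0 gj[symmetric] nu_def q_def by (simp add: gj)
  next
    case (Suc w)
    have B: "(be + nu*del)^(Suc w) \<ge> be^(Suc w) + real (Suc w) * be^w * (nu*del)"
      using bern[OF be0, of "nu*del"] nupos del01 by simp
    have "gfun b k (Suc j) u \<ge> a*(1-X) * (be^(Suc w) + real (Suc w) * be^w * (nu*del))"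
    proof -
      have "a * exp (-X) * (be + nu*del)^u \<ge> a * (1-X) * (be + nu*del)^u"
        using eX apos by (intro mult_right_mono mult_left_mono) (use be0 nupos del01 in auto)
      moreover have "a * (1-X) * (be + nu*del)^u \<ge> a*(1-X) * (be^(Suc w) + real (Suc w) * be^w * (nu*del))"
        using B Suc apos X01 by (intro mult_left_mono) auto
      ultimately show ?thesis unfolding gsj by linarith
    qed
    moreover
    define P where "P = be^w"
    have id: "nu * (a*(be*P) + real (Suc w) * (q * (a*(be*P)) + (1-q) * (a*P))
       + (real b - real (Suc w)) * (q * (a*(be*(be*P))) + (1-q)*(a*(be*P))))
       = a*(1-X) * (be*P + real (Suc w) * P * (nu*del)) - a * real (Suc w) * nu * del * P * q * del * (1 - real b * nu)"
      using nu1 unfolding X_def be_def by algebra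
    have nn: "a * real (Suc w) * nu * del * P * q * del * (1 - real b * nu) \<ge> 0"
      unfolding P_def using apos nupos del01 q01 bnu be0 by (intro mult_nonneg_nonneg) auto
    ultimately show ?thesis unfolding Suc gj nu_def[symmetric] q_def[symmetric] 
      using id by (simp add: P_def)
  qed
qed

lemma al_pow: "(real b/(real b+1))^j \<ge> 0" "(real b/(real b+1))^j \<le> 1"
  by (auto simp: power_le_one)

lemma g_nonneg: "gfun b k j u \<ge> 0"
  unfolding gfun_def using al_pow[of b j] by simp

lemma g_le: "gfun b k j u \<le> exp (-(real b * (1/(real k - 1)) / 2) * (1 - (real b/(real b+1))^j))"
  unfolding gfun_def using al_pow[of b j]
  by (intro mult_left_le) (auto intro!: power_le_one)

definition F :: "nat \<Rightarrow> nat \<Rightarrow> nat \<Rightarrow> nat \<Rightarrow> real" where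
  "F b k n u = (1/(real b+1)) * (\<Sum>j<n. gfun b k j u)"

lemma F_nonneg: "F b k n u \<ge> 0"
  unfolding F_def by (intro mult_nonneg_nonneg sum_nonneg) (auto simp: g_nonneg)

lemma F_ineq:
  assumes k: "k \<ge> 2"
  shows "F b k (Suc n) u \<ge> (1/(real b+1)) * ((if u = 0 then 1 else 0) + F b k n u
     + real u * ((1/(real k - 1)) * F b k n u + (1 - 1/(real k - 1)) * F b k n (u-1))
     + (real b - real u) * ((1/(real k - 1)) * F b k n (Suc u) + (1 - 1/(real k - 1)) * F b k n u))"
proof -
  define nu where "nu = 1/(real b+1)"
  define q where "q = 1/(real k - 1)"
  define br where "br j = gfun b k j u + real u * (q * gfun b k j u + (1-q) * gfun b k j (u-1))
     + (real b - real u) * (q * gfun b k j (Suc u) + (1-q) * gfun b k j u)" for j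
  have g0: "gfun b k 0 u \<ge> (if u = 0 then 1 else 0)"
    unfolding gfun_def by simp
  have gs: "(\<Sum>j<n. gfun b k (Suc j) u) \<ge> (\<Sum>j<n. nu * br j)"
    unfolding br_def nu_def q_def by (intro sum_mono g_step[OF k])
  define c1 where "c1 = 1 + real u * q + (real b - real u) * (1-q)"
  define c2 where "c2 = real u * (1-q)"
  define c3 where "c3 = (real b - real u) * q"
  have br': "br j = c1 * gfun b k j u + c2 * gfun b k j (u-1) + c3 * gfun b k j (Suc u)" for j
    unfolding br_def c1_def c2_def c3_def by (simp add: algebra_simps)
  have Fe: "F b k n v = nu * (\<Sum>j<n. gfun b k j v)" for v unfolding F_def nu_def by simp
  have "(\<Sum>j<n. nu * br j) = nu * (c1 * (\<Sum>j<n. gfun b k j u) + c2 * (\<Sum>j<n. gfun b k j (u-1))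
       + c3 * (\<Sum>j<n. gfun b k j (Suc u)))"
    unfolding br' by (simp add: sum.distrib sum_distrib_left[symmetric] distrib_left)
  also have "\<dots> = F b k n u
     + real u * (q * F b k n u + (1 - q) * F b k n (u-1))
     + (real b - real u) * (q * F b k n (Suc u) + (1 - q) * F b k n u)"
    unfolding Fe c1_def c2_def c3_def by (simp add: algebra_simps)
  finally have lin: "(\<Sum>j<n. nu * br j) = F b k n u
     + real u * (q * F b k n u + (1 - q) * F b k n (u-1))
     + (real b - real u) * (q * F b k n (Suc u) + (1 - q) * F b k n u)" .
  have "F b k (Suc n) u = nu * (gfun b k 0 u + (\<Sum>j<n. gfun b k (Suc j) u))"
    unfolding F_def nu_def by (subst sum.lessThan_Suc_shift) simp
  also have "\<dots> \<ge> nu * ((if u = 0 then 1 else 0) + (\<Sum>j<n. nu * br j))"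
    using g0 gs unfolding nu_def by (intro mult_left_mono) auto
  finally have X: "F b k (Suc n) u \<ge> nu * ((if u = 0 then 1 else 0) + (\<Sum>j<n. nu * br j))" .
  show ?thesis unfolding nu_def[symmetric] q_def[symmetric] using X unfolding lin by (simp add: add.assoc)
qed



definition step where
  "step b K t = (\<lambda>(x, y). bind_pmf (pmf_of_set {0..b}) (\<lambda>v.
         map_pmf (\<lambda>(c, c'). (x(v := c), y(v := c'))) (K t (x, y) v)))"

fun run where
  "run b K t0 s 0 = return_pmf s"
| "run b K t0 s (Suc n) = bind_pmf (step b K t0 s) (\<lambda>s'. run b K (Suc t0) s' n)"

lemma run_Suc': "run b K t0 s (Suc n) = bind_pmf (run b K t0 s n) (step b K (t0 + n))"
proof (induction n arbitrary: t0 s)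
  case 0 then show ?case by (simp add: bind_return_pmf bind_return_pmf')
next
  case (Suc n)
  have "run b K t0 s (Suc (Suc n)) = bind_pmf (step b K t0 s) (\<lambda>s'. run b K (Suc t0) s' (Suc n))" by simp
  also have "\<dots> = bind_pmf (step b K t0 s) (\<lambda>s'. bind_pmf (run b K (Suc t0) s' n) (step b K (Suc t0 + n)))"
    using Suc by simp
  also have "\<dots> = bind_pmf (run b K t0 s (Suc n)) (step b K (t0 + Suc n))"
    by (simp add: bind_assoc_pmf)
  finally show ?case .
qed

lemma chain_run: "coupled_chain b K x0 y0 n = run b K 0 (x0, y0) n"
proof (induction n)
  case 0 then show ?case by simp
next
  case (Suc n)
  show ?case unfolding run_Suc' coupled_chain.simps Suc[symmetric] step_def by simp
qed

lemma diag:
  fixes p :: "('a \<times> 'a) pmf"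
  assumes fin: "finite A" and ne: "A \<noteq> {}" and d: "\<forall>c\<in>A. pmf p (c, c) \<ge> 1 / real (card A)"
    and z: "z \<in> set_pmf p"
  shows "fst z = snd z \<and> fst z \<in> A"
proof (rule ccontr)
  assume nz: "\<not> (fst z = snd z \<and> fst z \<in> A)"
  define Dg where "Dg = (\<lambda>c. (c, c)) ` A"
  have zD: "z \<notin> Dg" using nz unfolding Dg_def by auto
  have finD: "finite Dg" unfolding Dg_def using fin by simp
  have "sum (pmf p) Dg = (\<Sum>c\<in>A. pmf p (c, c))"
    unfolding Dg_def by (subst sum.reindex) (auto simp: inj_on_def)
  also have "\<dots> \<ge> (\<Sum>c\<in>A. 1 / real (card A))" using d by (intro sum_mono) auto
  finally have s1: "sum (pmf p) Dg \<ge> 1" using fin ne by simp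
  have pz: "pmf p z > 0" using z by (simp add: pmf_positive)
  have "measure (measure_pmf p) (insert z Dg) = sum (pmf p) (insert z Dg)"
    using finD by (simp add: measure_measure_pmf_finite)
  also have "\<dots> = pmf p z + sum (pmf p) Dg" using finD zD by simp
  finally have "measure (measure_pmf p) (insert z Dg) > 1" using s1 pz by linarith
  moreover have "measure (measure_pmf p) (insert z Dg) \<le> 1" by simp
  ultimately show False by linarith
qed

lemma fin_avail: "finite (avail b k x v)" unfolding avail_def by simp

lemma self_avail: "proper_coloring b k x \<Longrightarrow> v \<in> {0..b} \<Longrightarrow> x v \<in> avail b k x v"
  unfolding proper_coloring_def avail_def colorings_def star_adj_def
  by (auto simp: PiE_def Pi_def)

lemma avail_leaf: "v \<in> {1..b} \<Longrightarrow> avail b k x v = {c \<in> {1..k}. c \<noteq> x 0}"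
  unfolding avail_def star_adj_def by auto

lemma avail_root: "avail b k x 0 = {c \<in> {1..k}. \<forall>l\<in>{1..b}. c \<noteq> x l}"
  unfolding avail_def star_adj_def by auto

lemma proper_upd:
  assumes "proper_coloring b k x" "v \<in> {0..b}" "c \<in> avail b k x v"
  shows "proper_coloring b k (x(v := c))"
  using assms unfolding proper_coloring_def avail_def colorings_def star_adj_def
  by (auto simp: PiE_def Pi_def extensional_def)



definition Bad :: "((nat \<Rightarrow> nat) \<times> (nat \<Rightarrow> nat)) set" where "Bad = {(x, y). x \<noteq> y}"

locale cc = fixes b k :: nat and K
  assumes K: "maximal_coupling_kernel b k K"
begin

lemma K_support:
  assumes "proper_coloring b k x" "proper_coloring b k y" "v \<in> {0..b}" "z \<in> set_pmf (K t (x, y) v)"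
  shows "fst z \<in> avail b k x v \<and> snd z \<in> avail b k y v"
proof -
  have m1: "map_pmf fst (K t (x, y) v) = pmf_of_set (avail b k x v)"
   and m2: "map_pmf snd (K t (x, y) v) = pmf_of_set (avail b k y v)"
    using K assms unfolding maximal_coupling_kernel_def by blast+
  have ne1: "avail b k x v \<noteq> {}" using self_avail assms by blast
  have ne2: "avail b k y v \<noteq> {}" using self_avail assms by blast
  have "fst z \<in> set_pmf (map_pmf fst (K t (x, y) v))" using assms(4) by simp
  then have 1: "fst z \<in> avail b k x v" unfolding m1 using ne1 fin_avail by simp
  have "snd z \<in> set_pmf (map_pmf snd (K t (x, y) v))" using assms(4) by simp
  then have 2: "snd z \<in> avail b k y v" unfolding m2 using ne2 fin_avail by simp
  show ?thesis using 1 2 by simp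
qed

lemma K_diag:
  assumes "proper_coloring b k x" "proper_coloring b k y" "v \<in> {0..b}"
    "avail b k x v = avail b k y v" "z \<in> set_pmf (K t (x, y) v)"
  shows "fst z = snd z \<and> fst z \<in> avail b k x v"
proof -
  have d: "\<forall>c \<in> avail b k x v \<inter> avail b k y v.
           pmf (K t (x, y) v) (c, c) \<ge> 1 / real (max (card (avail b k x v)) (card (avail b k y v)))"
    using K assms unfolding maximal_coupling_kernel_def by blast
  have ne1: "avail b k x v \<noteq> {}" using self_avail assms by blast
  show ?thesis
    by (rule diag[OF fin_avail ne1 _ assms(5)]) (use d assms(4) in simp)
qed

lemma set_step:
  assumes "s' \<in> set_pmf (step b K t (x, y))"
  obtains v z where "v \<in> {0..b}" "z \<in> set_pmf (K t (x, y) v)" "s' = (x(v := fst z), y(v := snd z))"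
  using assms unfolding step_def by (auto split: prod.splits)

lemma same_stays:
  assumes "proper_coloring b k x"
  shows "emeasure (measure_pmf (run b K t0 (x, x) n)) Bad = 0"
  using assms
proof (induction n arbitrary: t0 x)
  case 0 then show ?case by (simp add: Bad_def)
next
  case (Suc n)
  have "emeasure (measure_pmf (run b K t0 (x, x) (Suc n))) Bad
        = (\<integral>\<^sup>+s'. emeasure (measure_pmf (run b K (Suc t0) s' n)) Bad \<partial>measure_pmf (step b K t0 (x, x)))"
    by simp
  also have "\<dots> = (\<integral>\<^sup>+s'. 0 \<partial>measure_pmf (step b K t0 (x, x)))"
  proof (rule nn_integral_cong_AE, unfold AE_measure_pmf_iff, intro ballI)
    fix s' assume "s' \<in> set_pmf (step b K t0 (x, x))"
    then obtain v z where v: "v \<in> {0..b}" and z: "z \<in> set_pmf (K t0 (x, x) v)"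
      and s': "s' = (x(v := fst z), x(v := snd z))" by (rule set_step)
    have "fst z = snd z \<and> fst z \<in> avail b k x v" using K_diag[OF Suc.prems Suc.prems v refl z] .
    then have "s' = (x(v := fst z), x(v := fst z))" "proper_coloring b k (x(v := fst z))"
      using s' proper_upd[OF Suc.prems v] by auto
    then show "emeasure (measure_pmf (run b K (Suc t0) s' n)) Bad = 0" using Suc.IH by simp
  qed
  finally show ?case by simp
qed

end


lemma nn_pmf_set:
  assumes "finite S" "S \<noteq> {}" "\<And>x. x \<in> S \<Longrightarrow> f x \<ge> 0"
  shows "(\<integral>\<^sup>+x. ennreal (f x) \<partial>measure_pmf (pmf_of_set S)) = ennreal (sum f S / real (card S))"
proof -
  have "(\<integral>\<^sup>+x. ennreal (f x) \<partial>measure_pmf (pmf_of_set S)) = (\<Sum>x\<in>S. ennreal (f x)) / of_nat (card S)"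
    using assms by (simp add: nn_integral_pmf_of_set)
  also have "\<dots> = ennreal (sum f S) / ennreal (real (card S))"
    using assms by (simp add: ennreal_of_nat_eq_real_of_nat)
  also have "\<dots> = ennreal (sum f S / real (card S))"
    using assms by (intro divide_ennreal) (auto intro: sum_nonneg simp: card_gt_0_iff)
  finally show ?thesis .
qed

lemma test_le1: "emeasure (measure_pmf p) A \<le> 1"
  by (rule measure_pmf.emeasure_le_1)

lemma sum_ind1:
  fixes f :: "nat \<Rightarrow> real"
  assumes "finite A" "c1 \<in> A"
  shows "(\<Sum>c\<in>A. f (w + (if c = c1 then 1 else 0))) = f (w + 1) + (real (card A) - 1) * f w"
proof -
  have "(\<Sum>c\<in>A. f (w + (if c = c1 then 1 else 0))) = f (w + 1) + (\<Sum>c\<in>A - {c1}. f (w + (if c = c1 then 1 else 0)))"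
    using assms by (simp add: sum.remove)
  also have "(\<Sum>c\<in>A - {c1}. f (w + (if c = c1 then 1 else 0))) = (\<Sum>c\<in>A - {c1}. f w)"
    by (intro sum.cong) auto
  also have "\<dots> = (real (card A) - 1) * f w"
  proof -
    have "card A \<ge> 1" using assms by (metis card_0_eq empty_iff less_one not_le)
    then show ?thesis using assms by (simp add: of_nat_diff)
  qed
  finally show ?thesis .
qed

lemma sum_if_set:
  fixes a c :: real
  assumes "finite V" "S \<subseteq> V"
  shows "(\<Sum>v\<in>V. if v \<in> S then a else c) = real (card S) * a + (real (card V) - real (card S)) * c"
proof -
  have "(\<Sum>v\<in>V. if v \<in> S then a else c) = (\<Sum>v\<in>S. a) + (\<Sum>v\<in>V - S. c)"
    using assms by (simp add: sum.If_cases Int_absorb1 Diff_eq[symmetric] Int_commute Int_absorb2)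
  also have "\<dots> = real (card S) * a + (real (card V) - real (card S)) * c"
    using assms by (simp add: card_Diff_subset finite_subset of_nat_diff card_mono)
  finally show ?thesis .
qed

definition good where
  "good b k c1 c2 x y \<longleftrightarrow> proper_coloring b k x \<and> proper_coloring b k y \<and> x 0 = y 0 \<and>
     (\<forall>l\<in>{1..b}. x l \<noteq> y l \<longrightarrow> x l = c1 \<and> y l = c2) \<and> x 0 \<noteq> c1 \<and> x 0 \<noteq> c2"

definition Dset :: "nat \<Rightarrow> (nat \<Rightarrow> nat) \<Rightarrow> (nat \<Rightarrow> nat) \<Rightarrow> nat set" where
  "Dset b x y = {l\<in>{1..b}. x l \<noteq> y l}"
definition Uset :: "nat \<Rightarrow> nat \<Rightarrow> (nat \<Rightarrow> nat) \<Rightarrow> (nat \<Rightarrow> nat) \<Rightarrow> nat set" where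
  "Uset b c x y = {l\<in>{1..b}. x l = c \<and> y l = c}"

definition Phi where
  "Phi b k c1 c2 n x y = real (card (Dset b x y)) * (real b/(real b+1))^n
     + F b k n (card (Uset b c1 x y)) + F b k n (card (Uset b c2 x y))"

lemma Phi_nonneg: "Phi b k c1 c2 n x y \<ge> 0"
  unfolding Phi_def using F_nonneg[of b k n] by (simp add: add_nonneg_nonneg)

lemma Dset_root: "Dset b (x(0 := c)) (y(0 := c')) = Dset b x y"
  unfolding Dset_def by auto
lemma Uset_root: "Uset b d (x(0 := c)) (y(0 := c')) = Uset b d x y"
  unfolding Uset_def by auto
lemma Dset_leaf: "Dset b (x(v := c)) (y(v := c)) = Dset b x y - {v}"
  unfolding Dset_def by auto
lemma Uset_leaf: "v \<in> {1..b} \<Longrightarrow>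
  Uset b d (x(v := c)) (y(v := c)) = (Uset b d x y - {v}) \<union> (if c = d then {v} else {})"
  unfolding Uset_def by auto
lemma card_Uset_leaf: "v \<in> {1..b} \<Longrightarrow>
  card (Uset b d (x(v := c)) (y(v := c))) = card (Uset b d x y - {v}) + (if c = d then 1 else 0)"
proof -
  assume v: "v \<in> {1..b}"
  have fin: "finite (Uset b d x y - {v})" unfolding Uset_def by auto
  show ?thesis using fin unfolding Uset_leaf[OF v] by (cases "c = d") (auto simp: card.insert_remove)
qed

lemma ext_eq:
  assumes "proper_coloring b k x" "proper_coloring b k y" "x 0 = y 0" "Dset b x y = {}"
  shows "x = y"
proof
  fix l
  show "x l = y l"
  proof (cases "l \<in> {0..b}")
    case True
    then show ?thesis using assms by (cases "l = 0") (auto simp: Dset_def)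
  next
    case False
    then show ?thesis using assms
      unfolding proper_coloring_def colorings_def by (auto simp: PiE_def extensional_def)
  qed
qed

context cc begin

lemma main:
  assumes "good b k c1 c2 x y"
  shows "emeasure (measure_pmf (run b K t0 (x, y) n)) Bad \<le> ennreal (Phi b k c1 c2 n x y)"
  using assms
proof (induction n arbitrary: t0 x y)
  case 0
  show ?case
  proof (cases "Dset b x y = {}")
    case True
    then have "x = y" using ext_eq 0 unfolding good_def by blast
    then show ?thesis by (simp add: Bad_def)
  next
    case False
    then have "card (Dset b x y) \<ge> 1" unfolding Dset_def by (simp add: Suc_le_eq card_gt_0_iff)
    then have "Phi b k c1 c2 0 x y \<ge> 1" unfolding Phi_def
      using F_nonneg[of b k 0 "card (Uset b c1 x y)"] F_nonneg[of b k 0 "card (Uset b c2 x y)"] by simp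
    moreover have "emeasure (measure_pmf (run b K t0 (x, y) 0)) Bad \<le> 1"
      by (rule measure_pmf.emeasure_le_1)
    ultimately show ?thesis
      using ennreal_leI[of 1 "Phi b k c1 c2 0 x y"] by (simp add: order_trans)
  qed
next
  case (Suc n)
  note G = Suc.prems
  have px: "proper_coloring b k x" and py: "proper_coloring b k y" and r0: "x 0 = y 0"
    and pat: "\<forall>l\<in>{1..b}. x l \<noteq> y l \<longrightarrow> x l = c1 \<and> y l = c2"
    and rc1: "x 0 \<noteq> c1" and rc2: "x 0 \<noteq> c2" using G unfolding good_def by auto
  show ?case
  proof (cases "Dset b x y = {}")
    case True
    then have "x = y" using ext_eq px py r0 by blast
    then have "emeasure (measure_pmf (run b K t0 (x, y) (Suc n))) Bad = 0" using same_stays[OF px, of t0 "Suc n"] by (simp del: run.simps)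
    then show ?thesis by simp
  next
    case False
    then obtain l0 where l0: "l0 \<in> {1..b}" "x l0 \<noteq> y l0" unfolding Dset_def by auto
    have xl0: "x l0 = c1" and yl0: "y l0 = c2" using pat l0 by auto
    have xk: "x l \<in> {1..k}" if "l \<in> {0..b}" for l
      using px that unfolding proper_coloring_def colorings_def by auto
    have yk: "y l \<in> {1..k}" if "l \<in> {0..b}" for l
      using py that unfolding proper_coloring_def colorings_def by auto
    have c1k: "c1 \<in> {1..k}" using xk[of l0] l0 xl0 by auto
    have c2k: "c2 \<in> {1..k}" using yk[of l0] l0 yl0 by auto
    have x0k: "x 0 \<in> {1..k}" using xk[of 0] by auto
    have k2: "k \<ge> 2" using c1k x0k rc1 by auto
    have k1: "real k - 1 > 0" using k2 by simp
    define m where "m = card (Dset b x y)"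
    define u1 where "u1 = card (Uset b c1 x y)"
    define u2 where "u2 = card (Uset b c2 x y)"
    define al where "al = real b/(real b+1)"
    define FF where "FF = F b k n"
    define H where "H s' = (if good b k c1 c2 (fst s') (snd s') then Phi b k c1 c2 n (fst s') (snd s') else 1)" for s'
    define r where "r v = (if v = 0 then Phi b k c1 c2 n x y + (if Uset b c1 x y = {} then 1 else 0)
        + (if Uset b c2 x y = {} then 1 else 0)
      else (\<Sum>c\<in>avail b k x v. Phi b k c1 c2 n (x(v := c)) (y(v := c))) / real (card (avail b k x v)))" for v
    have rnn: "r v \<ge> 0" for v
    proof (cases "v = 0")
      case True
      then show ?thesis unfolding r_def using Phi_nonneg[of b k c1 c2 n x y] by simp
    next
      case False
      have "(\<Sum>c\<in>avail b k x v. Phi b k c1 c2 n (x(v := c)) (y(v := c))) \<ge> 0"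
        by (intro sum_nonneg) (rule Phi_nonneg)
      then show ?thesis unfolding r_def using False by simp
    qed
    have Hnn: "H s' \<ge> 0" for s' unfolding H_def using Phi_nonneg by auto
    have s1: "emeasure (measure_pmf (run b K t0 (x, y) (Suc n))) Bad
        \<le> (\<integral>\<^sup>+s'. ennreal (H s') \<partial>measure_pmf (step b K t0 (x, y)))"
    proof -
      have "emeasure (measure_pmf (run b K t0 (x, y) (Suc n))) Bad
        = (\<integral>\<^sup>+s'. emeasure (measure_pmf (run b K (Suc t0) s' n)) Bad \<partial>measure_pmf (step b K t0 (x, y)))"
        by simp
      also have "\<dots> \<le> (\<integral>\<^sup>+s'. ennreal (H s') \<partial>measure_pmf (step b K t0 (x, y)))"
      proof (rule nn_integral_mono)
        fix s' :: "(nat \<Rightarrow> nat) \<times> (nat \<Rightarrow> nat)"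
        obtain x' y' where s': "s' = (x', y')" by fastforce
        show "emeasure (measure_pmf (run b K (Suc t0) s' n)) Bad \<le> ennreal (H s')"
        proof (cases "good b k c1 c2 x' y'")
          case True
          then show ?thesis using Suc.IH[of x' y' "Suc t0"] unfolding s' H_def by simp
        next
          case False
          then show ?thesis using measure_pmf.emeasure_le_1 unfolding s' H_def by simp
        qed
      qed
      finally show ?thesis .
    qed
    have s2: "(\<integral>\<^sup>+s'. ennreal (H s') \<partial>measure_pmf (step b K t0 (x, y)))
       = (\<integral>\<^sup>+v. (\<integral>\<^sup>+z. ennreal (H (x(v := fst z), y(v := snd z))) \<partial>measure_pmf (K t0 (x, y) v))
            \<partial>measure_pmf (pmf_of_set {0..b}))"
      unfolding step_def by (simp add: split_beta)
    have Duni: "Dset b x y \<subseteq> {1..b}" "Uset b c1 x y \<subseteq> {1..b}" "Uset b c2 x y \<subseteq> {1..b}"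
      unfolding Dset_def Uset_def by auto
    have root: "(\<integral>\<^sup>+z. ennreal (H (x(0 := fst z), y(0 := snd z))) \<partial>measure_pmf (K t0 (x, y) 0)) \<le> ennreal (r 0)"
    proof -
      have "(\<integral>\<^sup>+z. ennreal (H (x(0 := fst z), y(0 := snd z))) \<partial>measure_pmf (K t0 (x, y) 0))
          \<le> (\<integral>\<^sup>+z. ennreal (r 0) \<partial>measure_pmf (K t0 (x, y) 0))"
      proof (rule nn_integral_mono_AE, unfold AE_measure_pmf_iff, intro ballI)
        fix z assume z: "z \<in> set_pmf (K t0 (x, y) 0)"
        have za: "fst z \<in> avail b k x 0" "snd z \<in> avail b k y 0" using K_support[OF px py _ z] by auto
        show "ennreal (H (x(0 := fst z), y(0 := snd z))) \<le> ennreal (r 0)"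
        proof (cases "fst z = snd z")
          case True
          have g: "good b k c1 c2 (x(0 := fst z)) (y(0 := snd z))"
            unfolding good_def
          proof (intro conjI)
            show "proper_coloring b k (x(0 := fst z))" using proper_upd[OF px _ za(1)] by simp
            show "proper_coloring b k (y(0 := snd z))" using proper_upd[OF py _ za(2)] by simp
            show "(x(0 := fst z)) 0 = (y(0 := snd z)) 0" using True by simp
            show "\<forall>l\<in>{1..b}. (x(0 := fst z)) l \<noteq> (y(0 := snd z)) l \<longrightarrow>
                (x(0 := fst z)) l = c1 \<and> (y(0 := snd z)) l = c2" using pat by auto
            show "(x(0 := fst z)) 0 \<noteq> c1" using za(1) l0 xl0 unfolding avail_root by auto
            show "(x(0 := fst z)) 0 \<noteq> c2" using za(2) l0 yl0 True unfolding avail_root by auto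
          qed
          have "H (x(0 := fst z), y(0 := snd z)) = Phi b k c1 c2 n x y"
            unfolding H_def using g by (simp add: Phi_def Dset_root Uset_root)
          then show ?thesis unfolding r_def by (intro ennreal_leI) auto
        next
          case False
          have ng: "\<not> good b k c1 c2 (x(0 := fst z)) (y(0 := snd z))"
            using False unfolding good_def by auto
          have danger: "Uset b c1 x y = {} \<or> Uset b c2 x y = {}"
          proof (rule ccontr)
            assume "\<not> (Uset b c1 x y = {} \<or> Uset b c2 x y = {})"
            then obtain l1 l2 where l1: "l1 \<in> {1..b}" "x l1 = c1" "y l1 = c1"
              and l2: "l2 \<in> {1..b}" "x l2 = c2" "y l2 = c2" unfolding Uset_def by blast
            have xy_img: "\<forall>c. (\<forall>l\<in>{1..b}. c \<noteq> x l) \<longleftrightarrow> (\<forall>l\<in>{1..b}. c \<noteq> y l)"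
            proof (intro allI iffI ballI)
              fix c l assume c: "\<forall>l\<in>{1..b}. c \<noteq> x l" and l: "l \<in> {1..b}"
              show "c \<noteq> y l"
              proof (cases "x l = y l")
                case True
                have "c \<noteq> x l" using c l by blast
                then show ?thesis using True by simp
              next
                case False
                then have "y l = c2" using pat l by blast
                then have "y l = x l2" using l2 by simp
                then show ?thesis using c l2(1) by blast
              qed
            next
              fix c l assume c: "\<forall>l\<in>{1..b}. c \<noteq> y l" and l: "l \<in> {1..b}"
              show "c \<noteq> x l"
              proof (cases "x l = y l")
                case True
                have "c \<noteq> y l" using c l by blast
                then show ?thesis using True by simp
              next
                case False
                then have "x l = c1" using pat l by blast
                then have "x l = y l1" using l1 by simp
                then show ?thesis using c l1(1) by blast
              qed
            qed
            have "avail b k x 0 = avail b k y 0"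
              using xy_img by (simp add: avail_root)
            then have "fst z = snd z" using K_diag[OF px py _ _ z] by auto
            then show False using False by simp
          qed
          have "H (x(0 := fst z), y(0 := snd z)) = 1" unfolding H_def using ng by simp
          moreover have "r 0 \<ge> 1" unfolding r_def using danger Phi_nonneg[of b k c1 c2 n x y] by auto
          ultimately show ?thesis by simp
        qed
      qed
      also have "\<dots> = ennreal (r 0)" by (simp add: measure_pmf.emeasure_space_1)
      finally show ?thesis .
    qed
    have leaf: "(\<integral>\<^sup>+z. ennreal (H (x(v := fst z), y(v := snd z))) \<partial>measure_pmf (K t0 (x, y) v)) = ennreal (r v)"
      if v: "v \<in> {1..b}" for v
    proof -
      have v0: "v \<in> {0..b}" "v \<noteq> 0" using v by auto
      define A where "A = avail b k x v"
      have AA: "avail b k x v = avail b k y v" using avail_leaf[OF v, of k x] avail_leaf[OF v, of k y] r0 by simp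
      have Afin: "finite A" unfolding A_def by (rule fin_avail)
      have Ane: "A \<noteq> {}" unfolding A_def using self_avail[OF px v0(1)] by blast
      define psi where "psi c = Phi b k c1 c2 n (x(v := c)) (y(v := c))" for c
      have "(\<integral>\<^sup>+z. ennreal (H (x(v := fst z), y(v := snd z))) \<partial>measure_pmf (K t0 (x, y) v))
          = (\<integral>\<^sup>+z. ennreal (psi (fst z)) \<partial>measure_pmf (K t0 (x, y) v))"
      proof (rule nn_integral_cong_AE, unfold AE_measure_pmf_iff, intro ballI)
        fix z assume z: "z \<in> set_pmf (K t0 (x, y) v)"
        have zz: "fst z = snd z" "fst z \<in> avail b k x v" using K_diag[OF px py v0(1) AA z] by auto
        have g: "good b k c1 c2 (x(v := fst z)) (y(v := fst z))"
          unfolding good_def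
        proof (intro conjI)
          show "proper_coloring b k (x(v := fst z))" using proper_upd[OF px v0(1) zz(2)] .
          show "proper_coloring b k (y(v := fst z))" using proper_upd[OF py v0(1)] zz(2) AA by simp
          show "(x(v := fst z)) 0 = (y(v := fst z)) 0" using r0 v0 by simp
          show "\<forall>l\<in>{1..b}. (x(v := fst z)) l \<noteq> (y(v := fst z)) l \<longrightarrow>
                (x(v := fst z)) l = c1 \<and> (y(v := fst z)) l = c2" using pat by auto
          show "(x(v := fst z)) 0 \<noteq> c1" using rc1 v0 by simp
          show "(x(v := fst z)) 0 \<noteq> c2" using rc2 v0 by simp
        qed
        show "ennreal (H (x(v := fst z), y(v := snd z))) = ennreal (psi (fst z))"
          unfolding H_def psi_def using g zz(1) by simp
      qed
      also have "\<dots> = (\<integral>\<^sup>+c. ennreal (psi c) \<partial>measure_pmf (map_pmf fst (K t0 (x, y) v)))" by simp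
      also have "map_pmf fst (K t0 (x, y) v) = pmf_of_set A"
        unfolding A_def using K px py v0(1) unfolding maximal_coupling_kernel_def by blast
      also have "(\<integral>\<^sup>+c. ennreal (psi c) \<partial>measure_pmf (pmf_of_set A)) = ennreal (sum psi A / real (card A))"
        by (rule nn_pmf_set[OF Afin Ane]) (simp add: psi_def Phi_nonneg)
      also have "\<dots> = ennreal (r v)" unfolding r_def A_def psi_def using v0 by simp
      finally show ?thesis .
    qed
    have s3: "(\<integral>\<^sup>+v. (\<integral>\<^sup>+z. ennreal (H (x(v := fst z), y(v := snd z))) \<partial>measure_pmf (K t0 (x, y) v))
            \<partial>measure_pmf (pmf_of_set {0..b})) \<le> (\<integral>\<^sup>+v. ennreal (r v) \<partial>measure_pmf (pmf_of_set {0..b}))"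
    proof (rule nn_integral_mono_AE, unfold AE_measure_pmf_iff, intro ballI)
      fix v assume "v \<in> set_pmf (pmf_of_set {0..b::nat})"
      then have v: "v \<in> {0..b}" by simp
      show "(\<integral>\<^sup>+z. ennreal (H (x(v := fst z), y(v := snd z))) \<partial>measure_pmf (K t0 (x, y) v)) \<le> ennreal (r v)"
      proof (cases "v = 0")
        case True then show ?thesis using root by simp
      next
        case False then have "v \<in> {1..b}" using v by auto
        then show ?thesis using leaf by simp
      qed
    qed
    have s4: "(\<integral>\<^sup>+v. ennreal (r v) \<partial>measure_pmf (pmf_of_set {0..b})) = ennreal (sum r {0..b} / real (card {0..b}))"
      by (rule nn_pmf_set) (auto simp: rnn)
    have s5: "sum r {0..b} / real (card {0..b}) \<le> Phi b k c1 c2 (Suc n) x y"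
    proof -
      define Av where "Av = {c \<in> {1..k}. c \<noteq> x 0}"
      have Avfin: "finite Av" unfolding Av_def by simp
      have cardAv: "card Av = k - 1"
      proof -
        have "Av = {1..k} - {x 0}" unfolding Av_def by auto
        then show ?thesis using x0k by simp
      qed
      have rcardAv: "real (card Av) = real k - 1" using cardAv k2 by (simp add: of_nat_diff)
      have c1A: "c1 \<in> Av" and c2A: "c2 \<in> Av" unfolding Av_def using c1k c2k rc1 rc2 by auto
      define A1 where "A1 = (FF u1 + (real k - 2) * FF (u1 - 1)) / (real k - 1)"
      define B1 where "B1 = (FF (u1 + 1) + (real k - 2) * FF u1) / (real k - 1)"
      define A2 where "A2 = (FF u2 + (real k - 2) * FF (u2 - 1)) / (real k - 1)"
      define B2 where "B2 = (FF (u2 + 1) + (real k - 2) * FF u2) / (real k - 1)"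
      have finU: "finite (Uset b c x y)" for c unfolding Uset_def by simp
      have finD: "finite (Dset b x y)" unfolding Dset_def by simp
      have rv: "r v = (if v \<in> Dset b x y then (real m - 1) * al^n else real m * al^n)
                 + (if v \<in> Uset b c1 x y then A1 else B1) + (if v \<in> Uset b c2 x y then A2 else B2)"
        if v: "v \<in> {1..b}" for v
      proof -
        define w1 where "w1 = card (Uset b c1 x y - {v})"
        define w2 where "w2 = card (Uset b c2 x y - {v})"
        define dm where "dm = real (card (Dset b x y - {v}))"
        have av: "avail b k x v = Av" unfolding Av_def using avail_leaf[OF v] .
        have ph: "Phi b k c1 c2 n (x(v := c)) (y(v := c))
            = dm * al^n + FF (w1 + (if c = c1 then 1 else 0)) + FF (w2 + (if c = c2 then 1 else 0))" for c
          unfolding Phi_def dm_def w1_def w2_def al_def FF_def Dset_leaf card_Uset_leaf[OF v] by simp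
        have "(\<Sum>c\<in>Av. Phi b k c1 c2 n (x(v := c)) (y(v := c)))
            = (\<Sum>c\<in>Av. dm * al^n) + (\<Sum>c\<in>Av. FF (w1 + (if c = c1 then 1 else 0)))
              + (\<Sum>c\<in>Av. FF (w2 + (if c = c2 then 1 else 0)))"
          unfolding ph by (simp add: sum.distrib)
        also have "\<dots> = real (card Av) * (dm * al^n) + (FF (w1 + 1) + (real (card Av) - 1) * FF w1)
              + (FF (w2 + 1) + (real (card Av) - 1) * FF w2)"
          using sum_ind1[OF Avfin c1A, of FF w1] sum_ind1[OF Avfin c2A, of FF w2] by simp
        finally have S: "(\<Sum>c\<in>Av. Phi b k c1 c2 n (x(v := c)) (y(v := c)))
            = (real k - 1) * (dm * al^n) + (FF (w1 + 1) + (real k - 2) * FF w1)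
              + (FF (w2 + 1) + (real k - 2) * FF w2)" unfolding rcardAv by simp
        have rv': "r v = dm * al^n + (FF (w1 + 1) + (real k - 2) * FF w1) / (real k - 1)
              + (FF (w2 + 1) + (real k - 2) * FF w2) / (real k - 1)"
          unfolding r_def using v k1 by (simp add: av S rcardAv add_divide_distrib)
        have dmv: "dm = (if v \<in> Dset b x y then real m - 1 else real m)"
        proof (cases "v \<in> Dset b x y")
          case True
          then have "card (Dset b x y) \<ge> 1" using finD by (metis One_nat_def Suc_leI card_gt_0_iff empty_iff)
          then show ?thesis unfolding dm_def m_def using True finD by (simp add: of_nat_diff)
        next
          case False then show ?thesis unfolding dm_def m_def by simp
        qed
        have G1: "(FF (w1 + 1) + (real k - 2) * FF w1) / (real k - 1) = (if v \<in> Uset b c1 x y then A1 else B1)"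
        proof (cases "v \<in> Uset b c1 x y")
          case True
          then have "u1 \<ge> 1" unfolding u1_def using finU by (metis One_nat_def Suc_leI card_gt_0_iff empty_iff)
          moreover have "w1 = u1 - 1" unfolding w1_def u1_def using True finU by simp
          ultimately show ?thesis unfolding A1_def using True by simp
        next
          case False
          then have "w1 = u1" unfolding w1_def u1_def by simp
          then show ?thesis unfolding B1_def using False by simp
        qed
        have G2: "(FF (w2 + 1) + (real k - 2) * FF w2) / (real k - 1) = (if v \<in> Uset b c2 x y then A2 else B2)"
        proof (cases "v \<in> Uset b c2 x y")
          case True
          then have "u2 \<ge> 1" unfolding u2_def using finU by (metis One_nat_def Suc_leI card_gt_0_iff empty_iff)
          moreover have "w2 = u2 - 1" unfolding w2_def u2_def using True finU by simp
          ultimately show ?thesis unfolding A2_def using True by simp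
        next
          case False
          then have "w2 = u2" unfolding w2_def u2_def by simp
          then show ?thesis unfolding B2_def using False by simp
        qed
        show ?thesis unfolding rv' G1 G2 dmv by (simp add: if_distrib)
      qed
      have sum1: "sum r {1..b} = (\<Sum>v\<in>{1..b}. if v \<in> Dset b x y then (real m - 1) * al^n else real m * al^n)
          + (\<Sum>v\<in>{1..b}. if v \<in> Uset b c1 x y then A1 else B1) + (\<Sum>v\<in>{1..b}. if v \<in> Uset b c2 x y then A2 else B2)"
        using rv by (simp add: sum.distrib)
      also have "\<dots> = (real m * ((real m - 1) * al^n) + (real b - real m) * (real m * al^n))
          + (real u1 * A1 + (real b - real u1) * B1) + (real u2 * A2 + (real b - real u2) * B2)"
      proof -
        have h1: "(\<Sum>v\<in>{1..b}. if v \<in> Dset b x y then (real m - 1) * al^n else real m * al^n)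
            = real (card (Dset b x y)) * ((real m - 1) * al^n) + (real (card {1..b}) - real (card (Dset b x y))) * (real m * al^n)"
          by (rule sum_if_set) (use Duni in auto)
        have h2: "(\<Sum>v\<in>{1..b}. if v \<in> Uset b c1 x y then A1 else B1)
            = real (card (Uset b c1 x y)) * A1 + (real (card {1..b}) - real (card (Uset b c1 x y))) * B1"
          by (rule sum_if_set) (use Duni in auto)
        have h3: "(\<Sum>v\<in>{1..b}. if v \<in> Uset b c2 x y then A2 else B2)
            = real (card (Uset b c2 x y)) * A2 + (real (card {1..b}) - real (card (Uset b c2 x y))) * B2"
          by (rule sum_if_set) (use Duni in auto)
        show ?thesis using h1 h2 h3 unfolding m_def u1_def u2_def by simp
      qed
      finally have sum1': "sum r {1..b} = (real m * ((real m - 1) * al^n) + (real b - real m) * (real m * al^n))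
          + (real u1 * A1 + (real b - real u1) * B1) + (real u2 * A2 + (real b - real u2) * B2)" .
      have r0v: "r 0 = real m * al^n + FF u1 + FF u2 + (if u1 = 0 then 1 else 0) + (if u2 = 0 then 1 else 0)"
        unfolding r_def Phi_def m_def u1_def u2_def al_def FF_def using finU by simp
      have sumr: "sum r {0..b} = r 0 + sum r {1..b}"
        by (simp add: sum.atLeast_Suc_atMost)
      define q where "q = 1 / (real k - 1)"
      have qA: "(real k - 2) / (real k - 1) = 1 - q" unfolding q_def using k1 by (simp add: field_simps)
      have dd: "(P + (real k - 2) * R) / (real k - 1) = q * P + (1 - q) * R" for P R
      proof -
        have "(P + (real k - 2) * R) / (real k - 1) = P / (real k - 1) + ((real k - 2) / (real k - 1)) * R"
          by (simp add: add_divide_distrib)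
        then show ?thesis unfolding qA unfolding q_def by simp
      qed
      have A1q: "A1 = q * FF u1 + (1 - q) * FF (u1 - 1)" unfolding A1_def by (rule dd)
      have B1q: "B1 = q * FF (Suc u1) + (1 - q) * FF u1" unfolding B1_def using dd by simp
      have A2q: "A2 = q * FF u2 + (1 - q) * FF (u2 - 1)" unfolding A2_def by (rule dd)
      have B2q: "B2 = q * FF (Suc u2) + (1 - q) * FF u2" unfolding B2_def using dd by simp
      have F1: "F b k (Suc n) u1 \<ge> (1/(real b+1)) * ((if u1 = 0 then 1 else 0) + FF u1 + real u1 * A1 + (real b - real u1) * B1)"
        using F_ineq[OF k2, where b=b and n=n and u=u1] unfolding A1q B1q q_def FF_def .
      have F2: "F b k (Suc n) u2 \<ge> (1/(real b+1)) * ((if u2 = 0 then 1 else 0) + FF u2 + real u2 * A2 + (real b - real u2) * B2)"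
        using F_ineq[OF k2, where b=b and n=n and u=u2] unfolding A2q B2q q_def FF_def .
      have Phis: "Phi b k c1 c2 (Suc n) x y = real m * al^(Suc n) + F b k (Suc n) u1 + F b k (Suc n) u2"
        unfolding Phi_def m_def u1_def u2_def al_def by simp
      have cb: "real (card {0..b}) = real b + 1" by simp
      have eq: "sum r {0..b} / real (card {0..b}) = real m * al^(Suc n)
         + (1/(real b+1)) * ((if u1 = 0 then 1 else 0) + FF u1 + real u1 * A1 + (real b - real u1) * B1)
         + (1/(real b+1)) * ((if u2 = 0 then 1 else 0) + FF u2 + real u2 * A2 + (real b - real u2) * B2)"
      proof -
        define E1 where "E1 = (if u1 = 0 then 1 else 0) + FF u1 + real u1 * A1 + (real b - real u1) * B1"
        define E2 where "E2 = (if u2 = 0 then 1 else 0) + FF u2 + real u2 * A2 + (real b - real u2) * B2"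
        define P where "P = al^n"
        have "sum r {0..b} = real b * (real m * P) + E1 + E2"
          unfolding sumr sum1' r0v E1_def E2_def P_def by (simp add: algebra_simps)
        moreover have "real b * (real m * P) / (real b + 1) = real m * (al * P)"
          unfolding al_def by simp
        ultimately show ?thesis unfolding cb E1_def[symmetric] E2_def[symmetric]
          by (simp add: add_divide_distrib P_def)
      qed
      show ?thesis unfolding eq Phis using F1 F2 by linarith
    qed
    have "emeasure (measure_pmf (run b K t0 (x, y) (Suc n))) Bad \<le> ennreal (sum r {0..b} / real (card {0..b}))"
      using s1 s2 s3 s4 by simp
    also have "\<dots> \<le> ennreal (Phi b k c1 c2 (Suc n) x y)" using s5 by (rule ennreal_leI)
    finally show ?thesis .
  qed
qed

end


theorem lemma5:
  fixes \<epsilon> :: real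
  assumes "\<epsilon> \<ge> 0"
  shows "\<exists>B. \<forall>(b::nat) k x0 y0 K.
     b \<ge> B \<longrightarrow>
     k = nat \<lfloor>real b / ((1 + \<epsilon>) * ln (real b))\<rfloor> \<longrightarrow>
     proper_coloring b k x0 \<longrightarrow> proper_coloring b k y0 \<longrightarrow>
     x0 0 = y0 0 \<longrightarrow>
     (\<exists>c1 c2. \<forall>l\<in>{1..b}. x0 l \<noteq> y0 l \<longrightarrow> x0 l = c1 \<and> y0 l = c2) \<longrightarrow>
     maximal_coupling_kernel b k K \<longrightarrow>
     measure_pmf.prob (coupled_chain b K x0 y0 (nat \<lceil>4 * (real b + 1) * ln (real b)\<rceil>))
        {(x, y). x = y} \<ge> 1 / 2"
proof -
  define B :: nat where "B = nat \<lceil>exp (400::real)\<rceil>"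
  show ?thesis
  proof (rule exI[of _ B], intro allI impI)
    fix b k x0 y0 K
    assume bB: "b \<ge> B" and kdef: "k = nat \<lfloor>real b / ((1 + \<epsilon>) * ln (real b))\<rfloor>"
      and px: "proper_coloring b k x0" and py: "proper_coloring b k y0" and r0: "x0 0 = y0 0"
      and ex: "\<exists>c1 c2. \<forall>l\<in>{1..b}. x0 l \<noteq> y0 l \<longrightarrow> x0 l = c1 \<and> y0 l = c2"
      and Kk: "maximal_coupling_kernel b k K"
    define T where "T = nat \<lceil>4 * (real b + 1) * ln (real b)\<rceil>"
    interpret cc b k K using Kk by unfold_locales
    have bge: "real b \<ge> exp 400"
    proof -
      have "real B \<ge> exp 400" unfolding B_def by linarith
      moreover have "real B \<le> real b" using bB by simp
      ultimately show ?thesis by linarith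
    qed
    have bpos: "real b > 0" using bge exp_gt_zero[of 400] by linarith
    have lnb: "ln (real b) \<ge> 400"
    proof -
      have "ln (exp 400) \<le> ln (real b)" using bge bpos by (subst ln_le_cancel_iff) auto
      then show ?thesis by simp
    qed
    have kb: "real k * ln (real b) \<le> real b"
    proof -
      define w where "w = real b / ((1 + \<epsilon>) * ln (real b))"
      have w0: "w \<ge> 0" unfolding w_def using bpos lnb assms by simp
      have "real k = real (nat \<lfloor>w\<rfloor>)" unfolding kdef w_def by simp
      also have "\<dots> = of_int \<lfloor>w\<rfloor>" using w0 by simp
      also have "\<dots> \<le> w" by simp
      finally have kw: "real k \<le> w" .
      have "real k * ((1 + \<epsilon>) * ln (real b)) \<le> w * ((1 + \<epsilon>) * ln (real b))"
        using kw assms lnb by (intro mult_right_mono) auto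
      also have "\<dots> = real b" unfolding w_def using assms lnb by simp
      finally have "real k * ((1 + \<epsilon>) * ln (real b)) \<le> real b" .
      moreover have "real k * ln (real b) \<le> real k * ((1 + \<epsilon>) * ln (real b))"
        using assms lnb by (intro mult_left_mono) (auto simp: algebra_simps)
      ultimately show ?thesis by linarith
    qed
    have T1: "real T \<ge> 4 * (real b + 1) * ln (real b)" unfolding T_def by linarith
    have T2: "real T \<le> 4 * (real b + 1) * ln (real b) + 1"
    proof -
      have "4 * (real b + 1) * ln (real b) \<ge> 0" using lnb by simp
      then show ?thesis unfolding T_def by linarith
    qed
    obtain c1 c2 where pat: "\<forall>l\<in>{1..b}. x0 l \<noteq> y0 l \<longrightarrow> x0 l = c1 \<and> y0 l = c2" using ex by blast
    have Pbad: "measure_pmf.prob (coupled_chain b K x0 y0 T) Bad \<le> 1/2"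
    proof (cases "Dset b x0 y0 = {}")
      case True
      then have "x0 = y0" using ext_eq px py r0 by blast
      then have "emeasure (measure_pmf (coupled_chain b K x0 y0 T)) Bad = 0"
        using same_stays[OF px, of 0 T] unfolding chain_run by simp
      then have "measure_pmf.prob (coupled_chain b K x0 y0 T) Bad = 0"
        by (simp add: measure_pmf.emeasure_eq_measure)
      then show ?thesis by simp
    next
      case False
      then obtain l0 where l0: "l0 \<in> {1..b}" "x0 l0 \<noteq> y0 l0" unfolding Dset_def by auto
      have xl0: "x0 l0 = c1" and yl0: "y0 l0 = c2" using pat l0 by auto
      have adj: "star_adj b 0 l0" unfolding star_adj_def using l0 by simp
      have "x0 0 \<noteq> x0 l0" using px adj l0 unfolding proper_coloring_def by auto
      then have rc1: "x0 0 \<noteq> c1" using xl0 by simp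
      have "y0 0 \<noteq> y0 l0" using py adj l0 unfolding proper_coloring_def by auto
      then have rc2: "x0 0 \<noteq> c2" using yl0 r0 by simp
      have x0k: "x0 0 \<in> {1..k}" and c1k: "c1 \<in> {1..k}"
        using px l0 xl0 unfolding proper_coloring_def colorings_def by auto
      have k2: "k \<ge> 2" using x0k c1k rc1 by auto
      have g: "good b k c1 c2 x0 y0" unfolding good_def using px py r0 pat rc1 rc2 by simp
      have em: "emeasure (measure_pmf (coupled_chain b K x0 y0 T)) Bad \<le> ennreal (Phi b k c1 c2 T x0 y0)"
        unfolding chain_run using main[OF g] .
      have mP: "measure_pmf.prob (coupled_chain b K x0 y0 T) Bad \<le> Phi b k c1 c2 T x0 y0"
        using em Phi_nonneg[of b k c1 c2 T x0 y0]
        by (simp add: measure_pmf.emeasure_eq_measure ennreal_le_iff)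
      define S where "S = (\<Sum>j<T. exp (-(real b * (1/(real k - 1)) / 2) * (1 - (real b/(real b+1))^j)))"
      have Fb: "F b k T u \<le> (1/(real b+1)) * S" for u
        unfolding F_def S_def by (intro mult_left_mono sum_mono g_le) auto
      have cD: "real (card (Dset b x0 y0)) \<le> real b"
      proof -
        have "card (Dset b x0 y0) \<le> card {1..b}" unfolding Dset_def by (intro card_mono) auto
        then show ?thesis by simp
      qed
      have "Phi b k c1 c2 T x0 y0 \<le> real b * (real b/(real b+1))^T + 2 * ((1/(real b+1)) * S)"
      proof -
        have "real (card (Dset b x0 y0)) * (real b/(real b+1))^T \<le> real b * (real b/(real b+1))^T"
          using cD by (intro mult_right_mono) auto
        then show ?thesis unfolding Phi_def
          using Fb[of "card (Uset b c1 x0 y0)"] Fb[of "card (Uset b c2 x0 y0)"] by linarith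
      qed
      also have "\<dots> \<le> 1/2" unfolding S_def by (rule numeric[OF lnb k2 kb T1 T2])
      finally show ?thesis using mP by linarith
    qed
    have "{(x, y). x = y} = UNIV - Bad" unfolding Bad_def by auto
    then have "measure_pmf.prob (coupled_chain b K x0 y0 T) {(x, y). x = y}
        = 1 - measure_pmf.prob (coupled_chain b K x0 y0 T) Bad"
      using measure_pmf.prob_compl[where M="coupled_chain b K x0 y0 T" and A=Bad] by simp
    then show "measure_pmf.prob (coupled_chain b K x0 y0 (nat \<lceil>4 * (real b + 1) * ln (real b)\<rceil>))
        {(x, y). x = y} \<ge> 1 / 2" using Pbad unfolding T_def by linarith
  qed
qed

end
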